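(* Let $R$ be a Noetherian ring and let $R_0$ be an elementary substructure of $R$ (in the language of rings). Then $R_0$ is Noetherian.
   Context: Rings are commutative and unital. *)

theory Defs
  imports "HOL-Algebra.Ring_Divisibility" "HOL-Algebra.Subrings"
begin

datatype rterm = RVar nat | RZero | ROne | RAdd rterm rterm | RNeg rterm | RMul rterm rterm

datatype rform = REq rterm rterm | RNot rform | RAnd rform rform | RExists nat rform

fun rterm_eval :: "('a, 'b) ring_scheme \<Rightarrow> (nat \<Rightarrow> 'a) \<Rightarrow> rterm \<Rightarrow> 'a" where
  "rterm_eval R e (RVar n) = e n"
| "rterm_eval R e RZero = \<zero>\<^bsub>R\<^esub>"
| "rterm_eval R e ROne = \<one>\<^bsub>R\<^esub>"
| "rterm_eval R e (RAdd s t) = rterm_eval R e s \<oplus>\<^bsub>R\<^esub> rterm_eval R e t"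
| "rterm_eval R e (RNeg s) = \<ominus>\<^bsub>R\<^esub> rterm_eval R e s"
| "rterm_eval R e (RMul s t) = rterm_eval R e s \<otimes>\<^bsub>R\<^esub> rterm_eval R e t"

fun rsat :: "('a, 'b) ring_scheme \<Rightarrow> (nat \<Rightarrow> 'a) \<Rightarrow> rform \<Rightarrow> bool" where
  "rsat R e (REq s t) = (rterm_eval R e s = rterm_eval R e t)"
| "rsat R e (RNot \<phi>) = (\<not> rsat R e \<phi>)"
| "rsat R e (RAnd \<phi> \<psi>) = (rsat R e \<phi> \<and> rsat R e \<psi>)"
| "rsat R e (RExists x \<phi>) = (\<exists>a\<in>carrier R. rsat R (e(x := a)) \<phi>)"

definition elementary_substructure :: "'a set \<Rightarrow> ('a, 'b) ring_scheme \<Rightarrow> bool" where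
  "elementary_substructure S R \<longleftrightarrow> subring S R \<and>
     (\<forall>\<phi> e. (\<forall>n. e n \<in> S) \<longrightarrow> (rsat (R\<lparr>carrier := S\<rparr>) e \<phi> \<longleftrightarrow> rsat R e \<phi>))"

end

theory Submission
  imports Defs
begin

fun tsum :: "nat \<Rightarrow> rterm" where
  "tsum 0 = RZero"
| "tsum (Suc n) = RAdd (tsum n) (RMul (RVar (2*n+2)) (RVar (2*n+1)))"

fun exs :: "nat \<Rightarrow> rform \<Rightarrow> rform" where
  "exs 0 \<phi> = \<phi>"
| "exs (Suc k) \<phi> = RExists (2*k+2) (exs k \<phi>)"

fun lsum :: "('a,'b) ring_scheme \<Rightarrow> (nat \<Rightarrow> 'a) \<Rightarrow> (nat \<Rightarrow> 'a) \<Rightarrow> nat \<Rightarrow> 'a" where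
  "lsum S x a 0 = \<zero>\<^bsub>S\<^esub>"
| "lsum S x a (Suc n) = lsum S x a n \<oplus>\<^bsub>S\<^esub> x n \<otimes>\<^bsub>S\<^esub> a n"

lemma tsum_eval: "rterm_eval S e (tsum n) = lsum S (\<lambda>i. e(2*i+2)) (\<lambda>i. e(2*i+1)) n"
  by (induction n) auto

lemma lsum_cong: "(\<And>i. i < n \<Longrightarrow> x i = x' i \<and> a i = a' i) \<Longrightarrow> lsum S x a n = lsum S x' a' n"
  by (induction n) auto

lemma ne1: "2*i+1 \<noteq> 2*k+(2::nat)" by presburger

lemma exs_sat:
  "rsat S e (exs k (REq (RVar 0) (tsum n))) \<longleftrightarrow>
   (\<exists>x. (\<forall>i<k. x i \<in> carrier S) \<and>
        e 0 = lsum S (\<lambda>i. if i<k then x i else e(2*i+2)) (\<lambda>i. e(2*i+1)) n)"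
proof (induction k arbitrary: e)
  case 0
  then show ?case by (simp add: tsum_eval)
next
  case (Suc k)
  have A: "(\<lambda>i. (e(2*k+2 := b)) (2*i+1)) = (\<lambda>i. e(2*i+1))" for b
    using ne1 by auto
  have B: "(\<lambda>i. if i<k then x i else (e(2*k+2 := b)) (2*i+2))
         = (\<lambda>i. if i<Suc k then (x(k:=b)) i else e(2*i+2))" for x b
    by (rule ext) auto
  show ?case
  proof
    assume "rsat S e (exs (Suc k) (REq (RVar 0) (tsum n)))"
    then obtain b where b: "b \<in> carrier S" and r: "rsat S (e(2*k+2 := b)) (exs k (REq (RVar 0) (tsum n)))"
      by auto
    obtain x where x: "\<forall>i<k. x i \<in> carrier S"
      and eq0: "(e(2*k+2 := b)) 0 = lsum S (\<lambda>i. if i<k then x i else (e(2*k+2 := b)) (2*i+2)) (\<lambda>i. (e(2*k+2 := b)) (2*i+1)) n"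
      using r Suc.IH[of "e(2*k+2 := b)"] by blast
    have eq: "e 0 = lsum S (\<lambda>i. if i<Suc k then (x(k:=b)) i else e(2*i+2)) (\<lambda>i. e(2*i+1)) n"
      using eq0 unfolding A B by simp
    show "\<exists>x. (\<forall>i<Suc k. x i \<in> carrier S) \<and>
        e 0 = lsum S (\<lambda>i. if i<Suc k then x i else e(2*i+2)) (\<lambda>i. e(2*i+1)) n"
      apply (rule exI[of _ "x(k:=b)"])
      using b x eq by (auto simp: less_Suc_eq)
  next
    assume "\<exists>x. (\<forall>i<Suc k. x i \<in> carrier S) \<and>
        e 0 = lsum S (\<lambda>i. if i<Suc k then x i else e(2*i+2)) (\<lambda>i. e(2*i+1)) n"
    then obtain x where x: "\<forall>i<Suc k. x i \<in> carrier S" and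
      eq: "e 0 = lsum S (\<lambda>i. if i<Suc k then x i else e(2*i+2)) (\<lambda>i. e(2*i+1)) n" by auto
    have xx: "x(k := x k) = x" by simp
    have "(e(2*k+2 := x k)) 0 = lsum S (\<lambda>i. if i<k then x i else (e(2*k+2 := x k)) (2*i+2)) (\<lambda>i. (e(2*k+2 := x k)) (2*i+1)) n"
      unfolding A B xx using eq by simp
    moreover have "\<forall>i<k. x i \<in> carrier S" using x by auto
    ultimately have "rsat S (e(2*k+2 := x k)) (exs k (REq (RVar 0) (tsum n)))"
      using Suc.IH[of "e(2*k+2 := x k)"] by blast
    moreover have "x k \<in> carrier S" using x by auto
    ultimately show "rsat S e (exs (Suc k) (REq (RVar 0) (tsum n)))"
      by auto
  qed
qed

lemma exs_sat':
  "rsat S e (exs n (REq (RVar 0) (tsum n))) \<longleftrightarrow>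
   (\<exists>x. (\<forall>i<n. x i \<in> carrier S) \<and> e 0 = lsum S x (\<lambda>i. e(2*i+1)) n)"
proof -
  have "lsum S (\<lambda>i. if i<n then x i else e(2*i+2)) (\<lambda>i. e(2*i+1)) n = lsum S x (\<lambda>i. e(2*i+1)) n" for x
    by (rule lsum_cong) auto
  then show ?thesis using exs_sat[of S e n n] by simp
qed

lemma (in ring) lsum_closed:
  "(\<And>i. i < n \<Longrightarrow> x i \<in> carrier R \<and> a i \<in> carrier R) \<Longrightarrow> lsum R x a n \<in> carrier R"
  by (induction n) auto

lemma (in ring) lsum_ideal:
  assumes "ideal J R"
  shows "(\<And>i. i < n \<Longrightarrow> x i \<in> carrier R \<and> a i \<in> J) \<Longrightarrow> lsum R x a n \<in> J"
proof (induction n)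
  case 0
  then show ?case using assms additive_subgroup.zero_closed ideal.axioms(1) by fastforce
next
  case (Suc n)
  then show ?case using assms
    by (simp add: additive_subgroup.a_closed ideal.axioms(1) ideal.I_l_closed)
qed

lemma (in cring) genideal_lsum:
  assumes "finite S'" "S' \<subseteq> carrier R"
  shows "y \<in> Idl S' \<Longrightarrow> \<exists>n a x. (\<forall>i<n. a i \<in> S' \<and> x i \<in> carrier R) \<and> y = lsum R x a n"
  using assms
proof (induction S' arbitrary: y rule: finite_induct)
  case empty
  have "Idl {} \<subseteq> {\<zero>}" by (rule genideal_minimal[OF zeroideal]) auto
  then have "y = \<zero>" using empty by auto
  then show ?case by (intro exI[of _ 0]) auto
next
  case (insert b S)
  have bc: "b \<in> carrier R" and Sc: "S \<subseteq> carrier R" using insert by auto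
  have "Idl (insert b S) = Idl (Idl {b} \<union> Idl S)"
  proof
    have i1: "ideal (Idl {b}) R" using genideal_ideal bc by auto
    have i2: "ideal (Idl S) R" using genideal_ideal Sc by auto
    have C1: "Idl {b} \<union> Idl S \<subseteq> carrier R" using ideal.Icarr[OF i1] ideal.Icarr[OF i2] by blast
    have C2: "Idl {b} \<union> Idl S \<subseteq> Idl (Idl {b} \<union> Idl S)" using genideal_self[OF C1] .
    have "insert b S \<subseteq> Idl (Idl {b} \<union> Idl S)"
      using C2 genideal_self'[OF bc] genideal_self[OF Sc] by blast
    then show "Idl (insert b S) \<subseteq> Idl (Idl {b} \<union> Idl S)"
      using genideal_minimal genideal_ideal[OF C1] by blast
  next
    have I1: "ideal (Idl (insert b S)) R" using genideal_ideal bc Sc by auto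
    show "Idl (Idl {b} \<union> Idl S) \<subseteq> Idl (insert b S)"
      apply (rule genideal_minimal[OF I1])
      using subset_Idl_subset[of "insert b S"] bc Sc by auto
  qed
  also have "\<dots> = Idl {b} <+> Idl S"
    using union_genideal genideal_ideal bc Sc by auto
  also have "\<dots> = PIdl b <+> Idl S" using cgenideal_eq_genideal[OF bc] by simp
  finally have "y \<in> PIdl b <+> Idl S" using insert by simp
  then obtain r y' where r: "r \<in> carrier R" and y': "y' \<in> Idl S" and y: "y = r \<otimes> b \<oplus> y'"
    unfolding set_add_def' cgenideal_def by auto
  obtain n a x where ax: "\<forall>i<n. a i \<in> S \<and> x i \<in> carrier R" and y'eq: "y' = lsum R x a n"
    using insert.IH[OF y' Sc] by auto
  have lc: "lsum R x a n \<in> carrier R" using lsum_closed ax Sc by blast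
  have "lsum R (x(n:=r)) (a(n:=b)) n = lsum R x a n" by (rule lsum_cong) auto
  hence "lsum R (x(n:=r)) (a(n:=b)) (Suc n) = y"
    using y y'eq lc r bc a_comm by simp
  moreover have "\<forall>i<Suc n. (a(n:=b)) i \<in> insert b S \<and> (x(n:=r)) i \<in> carrier R"
    using ax r by (auto simp: less_Suc_eq)
  ultimately show ?case by metis
qed

lemma lsum_carrier: "lsum (R\<lparr>carrier := C\<rparr>) x a n = lsum R x a n"
  by (induction n) auto

theorem proposition7p12:
  fixes R :: "('a, 'b) ring_scheme" and R0 :: "'a set"
  assumes "cring R" and "noetherian_ring R"
    and "elementary_substructure R0 R"
  shows "noetherian_ring (R\<lparr>carrier := R0\<rparr>)"
proof -
  interpret cring R by fact
  interpret N: noetherian_ring R by fact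
  have sub: "subring R0 R" and elem: "\<And>\<phi> e. (\<forall>n. e n \<in> R0) \<Longrightarrow>
      (rsat (R\<lparr>carrier := R0\<rparr>) e \<phi> \<longleftrightarrow> rsat R e \<phi>)"
    using assms(3) unfolding elementary_substructure_def by auto
  have R0c: "R0 \<subseteq> carrier R" using subring.axioms(2)[OF sub] submonoid.subset by blast
  have ring0: "ring (R\<lparr>carrier := R0\<rparr>)" using subring_is_ring[OF sub] .
  interpret R0: ring "R\<lparr>carrier := R0\<rparr>" by (rule ring0)
  show ?thesis
  proof (rule noetherian_ring.intro[OF ring0], rule noetherian_ring_axioms.intro)
    fix I assume I: "ideal I (R\<lparr>carrier := R0\<rparr>)"
    have IR0: "I \<subseteq> R0" using ideal.axioms(1)[OF I] additive_subgroup.a_subset by fastforce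
    have in_carrier: "I \<subseteq> carrier R" using IR0 R0c by auto
    define S where "S = { Idl\<^bsub>R\<^esub> S' | S'. S' \<subseteq> I \<and> finite S' }"
    have "\<exists>M \<in> S. \<forall>S' \<in> S. M \<subseteq> S' \<longrightarrow> S' = M"
    proof (rule subset_Zorn)
      fix C assume C: "subset.chain S C"
      show "\<exists>U \<in> S. \<forall>S' \<in> C. S' \<subseteq> U"
      proof (cases "C = {}")
        case True
        have "Idl\<^bsub>R\<^esub> {} \<in> S" by (auto simp add: S_def)
        thus ?thesis using True by auto
      next
        case False
        have "S \<subseteq> { I. ideal I R }"
          using in_carrier genideal_ideal by (auto simp add: S_def)
        hence "subset.chain { I. ideal I R } C"
          using C unfolding pred_on.chain_def by auto
        then have "\<Union>C \<in> C"
          using N.ideal_chain_is_trivial False by simp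
        thus ?thesis
          by (meson C Union_upper pred_on.chain_def subsetCE)
      qed
    qed
    then obtain M where M: "M \<in> S" "\<And>S'. \<lbrakk>S' \<in> S; M \<subseteq> S' \<rbrakk> \<Longrightarrow> S' = M"
      by auto
    then obtain S' where S': "S' \<subseteq> I" "finite S'" "M = Idl\<^bsub>R\<^esub> S'"
      by (auto simp add: S_def)
    have IM: "I \<subseteq> M"
    proof
      fix a assume a: "a \<in> I"
      have "M \<subseteq> Idl\<^bsub>R\<^esub> (insert a S')"
        using S' a in_carrier subset_Idl_subset[of "insert a S'" S'] by auto
      moreover have "Idl\<^bsub>R\<^esub> (insert a S') \<in> S"
        using a S' by (auto simp add: S_def)
      ultimately have "M = Idl\<^bsub>R\<^esub> (insert a S')"
        using M(2) by auto
      thus "a \<in> M"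
        using genideal_self S'(1) a in_carrier by (meson insert_subset subset_trans)
    qed
    have S'R0: "S' \<subseteq> R0" using S' IR0 by auto
    have "I = Idl\<^bsub>R\<lparr>carrier := R0\<rparr>\<^esub> S'"
    proof
      show "Idl\<^bsub>R\<lparr>carrier := R0\<rparr>\<^esub> S' \<subseteq> I"
        using R0.genideal_minimal[OF I S'(1)] .
    next
      show "I \<subseteq> Idl\<^bsub>R\<lparr>carrier := R0\<rparr>\<^esub> S'"
      proof
        fix y assume y: "y \<in> I"
        hence "y \<in> Idl\<^bsub>R\<^esub> S'" using IM S' by auto
        then obtain n a x where ax: "\<forall>i<n. a i \<in> S' \<and> x i \<in> carrier R"
          and yeq: "y = lsum R x a n"
          using genideal_lsum[OF S'(2)] S' in_carrier by blast
        define e where "e k = (if k = 0 then y else if odd k \<and> (k - 1) div 2 < n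
              then a ((k - 1) div 2) else \<zero>\<^bsub>R\<^esub>)" for k
        have e0: "e 0 = y" by (simp add: e_def)
        have ea: "e (2*i+1) = a i" if "i < n" for i using that by (simp add: e_def)
        have eR0: "\<forall>k. e k \<in> R0"
          using y IR0 ax S'R0 R0.zero_closed by (auto simp: e_def)
        have lc: "lsum G x' (\<lambda>i. e(2*i+1)) n = lsum G x' a n" for G :: "('a,'b) ring_scheme" and x'
          by (rule lsum_cong) (metis ea)
        have "rsat R e (exs n (REq (RVar 0) (tsum n)))"
          unfolding exs_sat' using ax yeq e0 lc by auto
        hence "rsat (R\<lparr>carrier := R0\<rparr>) e (exs n (REq (RVar 0) (tsum n)))"
          using elem[OF eR0] by simp
        then obtain x' where x': "\<forall>i<n. x' i \<in> R0"
          and y2: "y = lsum (R\<lparr>carrier := R0\<rparr>) x' a n"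
          unfolding exs_sat' using e0 lc by auto
        have Iid: "ideal (Idl\<^bsub>R\<lparr>carrier := R0\<rparr>\<^esub> S') (R\<lparr>carrier := R0\<rparr>)"
          using R0.genideal_ideal S'R0 by simp
        have "\<forall>i<n. a i \<in> Idl\<^bsub>R\<lparr>carrier := R0\<rparr>\<^esub> S'"
          using ax R0.genideal_self[of S'] S'R0 by auto
        then show "y \<in> Idl\<^bsub>R\<lparr>carrier := R0\<rparr>\<^esub> S'"
          using R0.lsum_ideal[OF Iid, of n x' a] x' y2 by simp
      qed
    qed
    then show "\<exists>A \<subseteq> carrier (R\<lparr>carrier := R0\<rparr>). finite A \<and> I = Idl\<^bsub>R\<lparr>carrier := R0\<rparr>\<^esub> A"
      using S'R0 S'(2) by auto
  qed
qed

end
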